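(* For every integer $n\geq 5$, $AR(n,C_3\cup P_2)=\max\{n+1,\,7\}$, where $C_3\cup P_2$ is the vertex-disjoint union of a triangle and a single edge. *)

theory Defs
  imports Main
begin

definition Kn_edges :: "nat \<Rightarrow> nat set set" where
  "Kn_edges n = {{u, v} | u v. u < n \<and> v < n \<and> u \<noteq> v}"

definition has_rainbow_C3_P2 :: "nat \<Rightarrow> (nat set \<Rightarrow> 'c) \<Rightarrow> bool" where
  "has_rainbow_C3_P2 n c \<longleftrightarrow>
     (\<exists>a b d x y. a < n \<and> b < n \<and> d < n \<and> x < n \<and> y < n \<and>
        distinct [a, b, d, x, y] \<and>
        card (c ` {{a, b}, {b, d}, {a, d}, {x, y}}) = 4)"

definition ar_C3_P2 :: "nat \<Rightarrow> nat" where
  "ar_C3_P2 n = (GREATEST k. \<exists>c :: nat set \<Rightarrow> nat.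
       card (c ` Kn_edges n) = k \<and> \<not> has_rainbow_C3_P2 n c)"

(* AR(n, C3 \<union> P2) = ar(n, C3 \<union> P2) + 1: the minimum number k of colours such that
   every edge-colouring of K_n with at least/exactly k colours contains a rainbow C3 \<union> P2
   (vacuous values of k with no colourings at all are excluded by this formulation). *)
definition AR_C3_P2 :: "nat \<Rightarrow> nat" where
  "AR_C3_P2 n = ar_C3_P2 n + 1"

end

theory Submission imports Defs begin

definition E :: "nat set \<Rightarrow> nat set set" where
  "E S = {{u, v} | u v. u \<in> S \<and> v \<in> S \<and> u \<noteq> v}"
definition col :: "(nat set \<Rightarrow> 'c) \<Rightarrow> nat set \<Rightarrow> 'c set" where
  "col c S = c ` E S"
definition priv :: "(nat set \<Rightarrow> 'c) \<Rightarrow> nat set \<Rightarrow> nat \<Rightarrow> 'c set" where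
  "priv c S v = col c S - col c (S - {v})"
definition rb :: "(nat set \<Rightarrow> 'c) \<Rightarrow> nat set \<Rightarrow> bool" where
  "rb c S \<longleftrightarrow> (\<exists>a b d x y. a \<in> S \<and> b \<in> S \<and> d \<in> S \<and> x \<in> S \<and> y \<in> S \<and>
        distinct [a, b, d, x, y] \<and> card (c ` {{a, b}, {b, d}, {a, d}, {x, y}}) = 4)"
definition tri :: "(nat set \<Rightarrow> 'c) \<Rightarrow> nat set \<Rightarrow> bool" where
  "tri c S \<longleftrightarrow> (\<exists>a b d. a \<in> S \<and> b \<in> S \<and> d \<in> S \<and> distinct [a, b, d] \<and>
        c {a, b} \<noteq> c {b, d} \<and> c {a, b} \<noteq> c {a, d} \<and> c {b, d} \<noteq> c {a, d})"

lemma E_sub: "E S \<subseteq> Pow S" unfolding E_def by auto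
lemma finite_E: "finite S \<Longrightarrow> finite (E S)"
  using E_sub finite_Pow_iff finite_subset by metis
lemma finite_col: "finite S \<Longrightarrow> finite (col c S)"
  unfolding col_def by (simp add: finite_E)
lemma E_mono: "T \<subseteq> S \<Longrightarrow> E T \<subseteq> E S" unfolding E_def by blast
lemma col_mono: "T \<subseteq> S \<Longrightarrow> col c T \<subseteq> col c S" unfolding col_def using E_mono by blast
lemma edge_col: "u \<in> S \<Longrightarrow> v \<in> S \<Longrightarrow> u \<noteq> v \<Longrightarrow> c {u, v} \<in> col c S"
  unfolding col_def E_def by blast
lemma col_E: "\<gamma> \<in> col c S \<Longrightarrow> \<exists>u v. u \<in> S \<and> v \<in> S \<and> u \<noteq> v \<and> \<gamma> = c {u, v}"
  unfolding col_def E_def by blast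

lemma notpriv: "\<gamma> \<in> priv c S w \<Longrightarrow> p \<in> S \<Longrightarrow> q \<in> S \<Longrightarrow> p \<noteq> w \<Longrightarrow> q \<noteq> w \<Longrightarrow> p \<noteq> q
   \<Longrightarrow> c {p, q} \<noteq> \<gamma>"
  unfolding priv_def using edge_col[of p "S - {w}" q c] by auto

lemma priv_edge: "\<gamma> \<in> priv c S w \<Longrightarrow> \<exists>u. u \<in> S \<and> u \<noteq> w \<and> \<gamma> = c {w, u}"
proof -
  assume a: "\<gamma> \<in> priv c S w"
  then have "\<gamma> \<in> col c S" unfolding priv_def by simp
  then obtain u v where uv: "u \<in> S" "v \<in> S" "u \<noteq> v" "\<gamma> = c {u, v}"
    using col_E[of \<gamma> c S] by blast
  have "w = u \<or> w = v"
  proof (rule ccontr)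
    assume "\<not> (w = u \<or> w = v)"
    then have "c {u, v} \<in> col c (S - {w})" using edge_col[of u "S - {w}" v c] uv by blast
    then show False using a uv unfolding priv_def by simp
  qed
  then show ?thesis
  proof
    assume "w = u" then show ?thesis using uv by blast
  next
    assume "w = v"
    have "{u, v} = {v, u}" by blast
    then have "\<gamma> = c {w, u}" using uv \<open>w = v\<close> by simp
    then show ?thesis using uv \<open>w = v\<close> by blast
  qed
qed

lemma priv_two: "finite S \<Longrightarrow> card (priv c S w) \<ge> 2 \<Longrightarrow>
   \<exists>a b. a \<in> S \<and> b \<in> S \<and> a \<noteq> w \<and> b \<noteq> w \<and> a \<noteq> b \<and> c {w, a} \<noteq> c {w, b} \<and>
     c {w, a} \<in> priv c S w \<and> c {w, b} \<in> priv c S w"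
proof -
  assume f: "finite S" and c2: "card (priv c S w) \<ge> 2"
  obtain \<alpha> B where "priv c S w = insert \<alpha> B" "\<alpha> \<notin> B" "1 \<le> card B"
    using c2 card_le_Suc_iff[of 1 "priv c S w"] by auto
  moreover then have "B \<noteq> {}" by auto
  then obtain \<beta> where "\<beta> \<in> B" by blast
  ultimately have ab: "\<alpha> \<in> priv c S w" "\<beta> \<in> priv c S w" "\<alpha> \<noteq> \<beta>" by auto
  obtain a where a: "a \<in> S" "a \<noteq> w" "\<alpha> = c {w, a}" using priv_edge[OF ab(1)] by blast
  obtain b where b: "b \<in> S" "b \<noteq> w" "\<beta> = c {w, b}" using priv_edge[OF ab(2)] by blast
  have "a \<noteq> b" using a b ab by auto
  then show ?thesis using a b ab by blast
qed

lemma col_split: "finite S \<Longrightarrow> card (col c S) \<le> card (col c (S - {v})) + card (priv c S v)"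
proof -
  assume f: "finite S"
  have "col c S = col c (S - {v}) \<union> priv c S v" unfolding priv_def using col_mono[of "S - {v}" S c] by blast
  then show ?thesis using card_Un_le[of "col c (S - {v})" "priv c S v"] by simp
qed

lemma rb_mono: "T \<subseteq> S \<Longrightarrow> rb c T \<Longrightarrow> rb c S" unfolding rb_def by blast
lemma tri_mono: "T \<subseteq> S \<Longrightarrow> tri c T \<Longrightarrow> tri c S" unfolding tri_def by blast

lemma rb_intro:
  assumes "a \<in> S" "b \<in> S" "d \<in> S" "x \<in> S" "y \<in> S" "distinct [a, b, d, x, y]"
    "c {a, b} \<noteq> c {b, d}" "c {a, b} \<noteq> c {a, d}" "c {a, b} \<noteq> c {x, y}"
    "c {b, d} \<noteq> c {a, d}" "c {b, d} \<noteq> c {x, y}" "c {a, d} \<noteq> c {x, y}"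
  shows "rb c S"
proof -
  have "c ` {{a, b}, {b, d}, {a, d}, {x, y}} = set [c {a, b}, c {b, d}, c {a, d}, c {x, y}]" by simp
  moreover have "distinct [c {a, b}, c {b, d}, c {a, d}, c {x, y}]" using assms(7-12) by simp
  then have "card (set [c {a, b}, c {b, d}, c {a, d}, c {x, y}]) = 4" using distinct_card by fastforce
  ultimately have "card (c ` {{a, b}, {b, d}, {a, d}, {x, y}}) = 4" by simp
  then show ?thesis unfolding rb_def using assms(1-6) by blast
qed

lemma gallai: "finite S \<Longrightarrow> card S \<ge> 1 \<Longrightarrow> card (col c S) \<ge> card S \<Longrightarrow> tri c S"
proof (induction "card S" arbitrary: S rule: less_induct)
  case less
  show ?case
  proof (cases "\<exists>v\<in>S. card (priv c S v) \<le> 1")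
    case True
    then obtain v where v: "v \<in> S" "card (priv c S v) \<le> 1" by blast
    have cs: "card (S - {v}) = card S - 1" using v less.prems by simp
    show ?thesis
    proof (cases "card S = 1")
      case True
      then obtain u where "S = {u}" by (metis card_1_singletonE)
      then have "E S = {}" unfolding E_def by auto
      then show ?thesis using less.prems True unfolding col_def by simp
    next
      case False
      have "tri c (S - {v})"
        using less.hyps[of "S - {v}"] cs less.prems col_split[of S c v] v False by fastforce
      then show ?thesis using tri_mono by blast
    qed
  next
    case False
    obtain v where "v \<in> S" using less.prems by (metis card.empty ex_in_conv not_one_le_zero)
    then have v: "v \<in> S" "card (priv c S v) \<ge> 2" using False by auto
    obtain a b where ab: "a \<in> S" "b \<in> S" "a \<noteq> v" "b \<noteq> v" "a \<noteq> b" "c {v, a} \<noteq> c {v, b}"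
      "c {v, a} \<in> priv c S v" "c {v, b} \<in> priv c S v"
      using priv_two[OF less.prems(1) v(2)] by blast
    have "c {a, b} \<noteq> c {v, a}" "c {a, b} \<noteq> c {v, b}" using notpriv ab by metis+
    then show ?thesis unfolding tri_def using ab v
      by (rule_tac x=v in exI, rule_tac x=a in exI, rule_tac x=b in exI) (auto simp: insert_commute)
  qed
qed

lemma tri1:
  assumes S: "x \<in> S" "v \<in> S" "u \<in> S" "z \<in> S" "y \<in> S" and d: "distinct [x, v, u, z, y]"
    and p1: "c {x, v} \<in> priv c S x" and p2: "c {x, u} \<in> priv c S x" and ne: "c {x, v} \<noteq> c {x, u}"
    and p3: "c {v, u} \<in> priv c S v"
  shows "rb c S"
proof -
  have 1: "c {v, u} \<noteq> c {x, v}" using notpriv[OF p1, of v u] S d by auto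
  have 2: "c {z, y} \<noteq> c {x, v}" using notpriv[OF p1, of z y] S d by auto
  have 3: "c {v, u} \<noteq> c {x, u}" using notpriv[OF p2, of v u] S d by auto
  have 4: "c {z, y} \<noteq> c {v, u}" using notpriv[OF p3, of z y] S d by auto
  have 5: "c {z, y} \<noteq> c {x, u}" using notpriv[OF p2, of z y] S d by auto
  show ?thesis by (rule rb_intro[of x S v u z y]) (use S d 1 2 3 4 5 ne in auto)
qed

lemma tri2:
  assumes S: "a \<in> S" "x \<in> S" "y \<in> S" "v \<in> S" "b \<in> S" and d: "distinct [a, x, y, v, b]"
    and p1: "c {x, a} \<in> priv c S x" and p2: "c {y, a} \<in> priv c S y" and p3: "c {v, b} \<in> priv c S v"
    and eq: "c {x, y} = c {a, b}"
  shows "rb c S"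
proof -
  have s1: "{a, x} = {x, a}" "{a, y} = {y, a}" by auto
  have 1: "c {a, b} \<noteq> c {x, a}" using notpriv[OF p1, of a b] S d by auto
  have 2: "c {a, y} \<noteq> c {x, a}" using notpriv[OF p1, of a y] S d by auto
  have 3: "c {v, b} \<noteq> c {x, a}" using notpriv[OF p1, of v b] S d by auto
  have 4: "c {a, b} \<noteq> c {y, a}" using notpriv[OF p2, of a b] S d by auto
  have 5: "c {a, b} \<noteq> c {v, b}" using notpriv[OF p3, of a b] S d by auto
  have 6: "c {v, b} \<noteq> c {y, a}" using notpriv[OF p2, of v b] S d by auto
  show ?thesis by (rule rb_intro[of a S x y v b]) (use S d 1 2 3 4 5 6 eq s1 in auto)
qed

lemma allpriv:
  assumes f: "finite S" and c5: "card S \<ge> 5" and P: "\<forall>v\<in>S. card (priv c S v) \<ge> 2"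
  shows "rb c S"
proof (rule ccontr)
  assume nrb: "\<not> rb c S"
  obtain v where v: "v \<in> S" using c5 by (metis card.empty ex_in_conv not_numeral_le_zero)
  obtain a b where ab: "a \<in> S" "b \<in> S" "a \<noteq> v" "b \<noteq> v" "a \<noteq> b" "c {v, a} \<noteq> c {v, b}"
      "c {v, a} \<in> priv c S v" "c {v, b} \<in> priv c S v"
    using priv_two[OF f] P v by blast
  define R where "R = S - {v, a, b}"
  have cR: "card R \<ge> 2" unfolding R_def using f c5 v ab
    by (simp add: card_Diff_subset)
  obtain x B where "R = insert x B" "x \<notin> B" "1 \<le> card B"
    using cR card_le_Suc_iff[of 1 R] by auto
  moreover then have "B \<noteq> {}" by auto
  then obtain y where "y \<in> B" by blast
  ultimately have xy: "x \<in> R" "y \<in> R" "x \<noteq> y" by auto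
  have Rg: "c {p, q} = c {a, b}" if "p \<in> R" "q \<in> R" "p \<noteq> q" for p q
  proof (rule ccontr)
    assume ne: "c {p, q} \<noteq> c {a, b}"
    have 1: "c {a, b} \<noteq> c {v, a}" using notpriv[OF ab(7), of a b] ab by auto
    have 2: "c {p, q} \<noteq> c {v, a}" using notpriv[OF ab(7), of p q] that R_def by auto
    have 3: "c {a, b} \<noteq> c {v, b}" using notpriv[OF ab(8), of a b] ab by auto
    have 4: "c {p, q} \<noteq> c {v, b}" using notpriv[OF ab(8), of p q] that R_def by auto
    have "rb c S" by (rule rb_intro[of v S a b p q]) (use ab v that R_def 1 2 3 4 ne in auto)
    then show False using nrb by simp
  qed
  have pa: "c {z, a} \<in> priv c S z" if z: "z \<in> R" "w \<in> R" "z \<noteq> w" for z w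
  proof -
    have zS: "z \<in> S" using z R_def by auto
    obtain p q where pq: "p \<in> S" "q \<in> S" "p \<noteq> z" "q \<noteq> z" "p \<noteq> q" "c {z, p} \<noteq> c {z, q}"
      "c {z, p} \<in> priv c S z" "c {z, q} \<in> priv c S z"
      using priv_two[OF f] P zS by blast
    have nR: "r \<notin> R" if "r \<in> S" "r \<noteq> z" "c {z, r} \<in> priv c S z" for r
    proof
      assume "r \<in> R"
      then have "c {z, r} = c {a, b}" using Rg z that by auto
      moreover have "c {a, b} \<noteq> c {z, r}" using notpriv[OF that(3), of a b] ab z R_def by auto
      ultimately show False by simp
    qed
    have pv: "p \<in> {v, a, b}" "q \<in> {v, a, b}" using nR[of p] nR[of q] pq R_def by auto
    have wS: "w \<in> S" "w \<notin> {v, a, b}" "z \<notin> {v,a,b}" using z R_def by auto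
    have no1: False if "c {z, v} \<in> priv c S z" "c {z, u} \<in> priv c S z" "c {z, v} \<noteq> c {z, u}"
      "u \<in> {a, b}" for u
    proof (cases "u = a")
      case True
      have "rb c S" by (rule tri1[of z S v a b w]) (use that True zS wS ab v z(3) in auto)
      then show False using nrb by simp
    next
      case False
      then have "u = b" using that by auto
      then have "rb c S" by (intro tri1[of z S v b a w]) (use that zS wS ab v z(3) in auto)
      then show False using nrb by simp
    qed
    show ?thesis
    proof (cases "p = v \<or> q = v")
      case True
      then show ?thesis using no1[of p] no1[of q] pq pv by auto
    next
      case False
      then show ?thesis using pq pv by auto
    qed
  qed
  have "rb c S"
    by (rule tri2[of a S x y v b]) (use pa[of x y] pa[of y x] xy Rg[of x y] ab v R_def in auto)
  then show False using nrb by simp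
qed

lemma E_card2: "E S = {B. B \<subseteq> S \<and> card B = 2}"
proof (rule set_eqI, rule iffI)
  fix B assume "B \<in> E S"
  then obtain u v where "B = {u, v}" "u \<in> S" "v \<in> S" "u \<noteq> v" unfolding E_def by blast
  then show "B \<in> {B. B \<subseteq> S \<and> card B = 2}" by simp
next
  fix B assume "B \<in> {B. B \<subseteq> S \<and> card B = 2}"
  then have B: "B \<subseteq> S" "card B = 2" by auto
  have "\<exists>x y. B = {x, y} \<and> x \<noteq> y" using card_2_iff[THEN iffD1, OF B(2)] .
  then obtain u v where uv: "B = {u, v}" "u \<noteq> v" by blast
  then have "u \<in> S" "v \<in> S" using B(1) by auto
  then show "B \<in> E S" unfolding E_def using uv by blast
qed

lemma card_E4: "finite S \<Longrightarrow> card S = 4 \<Longrightarrow> card (E S) = 6"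
  by (simp add: E_card2 n_subsets numeral_eq_Suc)

lemma col_insert: "col c (insert x A) = (\<lambda>y. c {x, y}) ` (A - {x}) \<union> col c A"
proof (rule set_eqI, rule iffI)
  fix \<gamma> assume "\<gamma> \<in> col c (insert x A)"
  then obtain u v where uv: "u \<in> insert x A" "v \<in> insert x A" "u \<noteq> v" "\<gamma> = c {u, v}"
    using col_E[of \<gamma> c "insert x A"] by blast
  show "\<gamma> \<in> (\<lambda>y. c {x, y}) ` (A - {x}) \<union> col c A"
  proof (cases "u = x")
    case True
    then have "v \<in> A - {x}" using uv by simp
    then have "c {x, v} \<in> (\<lambda>y. c {x, y}) ` (A - {x})" by (rule imageI)
    then show ?thesis using uv True by simp
  next
    case F1: False
    show ?thesis
    proof (cases "v = x")
      case True
      have e: "{u, v} = {x, u}" using True by (simp add: insert_commute)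
      have "u \<in> A - {x}" using uv F1 by simp
      then have "c {x, u} \<in> (\<lambda>y. c {x, y}) ` (A - {x})" by (rule imageI)
      then show ?thesis using uv e by simp
    next
      case False
      then have "u \<in> A" "v \<in> A" using uv F1 by simp_all
      then have "c {u, v} \<in> col c A" using edge_col[of u A v c] uv by simp
      then show ?thesis using uv by simp
    qed
  qed
next
  fix \<gamma> assume "\<gamma> \<in> (\<lambda>y. c {x, y}) ` (A - {x}) \<union> col c A"
  then show "\<gamma> \<in> col c (insert x A)"
  proof
    assume "\<gamma> \<in> (\<lambda>y. c {x, y}) ` (A - {x})"
    then obtain y where y: "y \<in> A - {x}" "\<gamma> = c {x, y}" by blast
    have "c {x, y} \<in> col c (insert x A)" using y(1) by (intro edge_col) auto
    then show ?thesis using y by simp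
  next
    assume "\<gamma> \<in> col c A"
    moreover have "col c A \<subseteq> col c (insert x A)" by (rule col_mono) blast
    ultimately show ?thesis by blast
  qed
qed

lemma three_elems: "finite A \<Longrightarrow> 3 \<le> card A \<Longrightarrow>
    \<exists>a b d. a \<in> A \<and> b \<in> A \<and> d \<in> A \<and> a \<noteq> b \<and> a \<noteq> d \<and> b \<noteq> d"
proof -
  assume h: "finite A" "3 \<le> card A"
  obtain T where T: "T \<subseteq> A" "card T = 3" "finite T" by (rule obtain_subset_with_card_n[OF h(2)])
  have "\<exists>x y z. T = {x, y, z} \<and> x \<noteq> y \<and> y \<noteq> z \<and> x \<noteq> z" using card_3_iff[THEN iffD1, OF T(2)] .
  then obtain a b d where abd: "T = {a, b, d}" "a \<noteq> b" "b \<noteq> d" "a \<noteq> d" by blast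
  have "a \<in> A" "b \<in> A" "d \<in> A" using abd(1) T(1) by auto
  then show ?thesis using abd by blast
qed

lemma five:
  assumes f: "finite S" and c5: "card S = 5" and c7: "card (col c S) \<ge> 7"
  shows "rb c S"
proof (rule ccontr)
  assume nrb: "\<not> rb c S"
  have "\<not> (\<forall>v\<in>S. card (priv c S v) \<ge> 2)" using allpriv[OF f, of c] c5 nrb by auto
  then obtain v where v: "v \<in> S" "\<not> 2 \<le> card (priv c S v)" by blast
  define Q where "Q = S - {v}"
  have fQ: "finite Q" and cQ: "card Q = 4" using f c5 v unfolding Q_def by auto
  have cc: "card (col c S) \<le> card (col c Q) + card (priv c S v)" using col_split[OF f, of c v] Q_def by simp
  have E6: "card (E Q) = 6" using card_E4[OF fQ cQ] .
  have le: "card (col c Q) \<le> 6" using card_image_le[of "E Q" c] finite_E[OF fQ] E6 unfolding col_def by simp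
  have eq: "card (col c Q) = 6" using cc c7 le v(2) by simp
  have inj: "inj_on c (E Q)" using eq_card_imp_inj_on[of "E Q" c] finite_E[OF fQ] E6 eq unfolding col_def by simp
  have "card (priv c S v) \<ge> 1" using cc c7 le by simp
  then have "priv c S v \<noteq> {}" by auto
  then obtain \<rho> where \<rho>: "\<rho> \<in> priv c S v" by blast
  obtain u where u: "u \<in> S" "u \<noteq> v" "\<rho> = c {v, u}" using priv_edge[OF \<rho>] by blast
  have uQ: "u \<in> Q" using u Q_def by simp
  have "card (Q - {u}) = 3" using cQ uQ fQ by simp
  then have "\<exists>x y z. Q - {u} = {x, y, z} \<and> x \<noteq> y \<and> y \<noteq> z \<and> x \<noteq> z" by (rule card_3_iff[THEN iffD1])
  then obtain a b d where abd: "Q - {u} = {a, b, d}" "a \<noteq> b" "b \<noteq> d" "a \<noteq> d" by blast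
  have inQ: "a \<in> Q" "b \<in> Q" "d \<in> Q" "a \<noteq> u" "b \<noteq> u" "d \<noteq> u" using abd by auto
  have ne: "c {p, q} \<noteq> c {r, s}" if "p \<in> Q" "q \<in> Q" "r \<in> Q" "s \<in> Q" "p \<noteq> q" "r \<noteq> s" "{p, q} \<noteq> {r, s}"
    for p q r s
  proof
    assume "c {p, q} = c {r, s}"
    moreover have "{p, q} \<in> E Q" "{r, s} \<in> E Q" unfolding E_def using that by blast+
    ultimately have "{p, q} = {r, s}" using inj_onD[OF inj] by blast
    then show False using that by simp
  qed
  have 1: "c {a, b} \<noteq> c {b, d}" using ne[of a b b d] inQ abd by (auto simp: doubleton_eq_iff)
  have 2: "c {a, b} \<noteq> c {a, d}" using ne[of a b a d] inQ abd by (auto simp: doubleton_eq_iff)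
  have 3: "c {b, d} \<noteq> c {a, d}" using ne[of b d a d] inQ abd by (auto simp: doubleton_eq_iff)
  have QS: "Q \<subseteq> S" "v \<notin> Q" using Q_def by auto
  have 4: "c {a, b} \<noteq> c {v, u}" using notpriv[OF \<rho>, of a b] inQ QS abd u by auto
  have 5: "c {b, d} \<noteq> c {v, u}" using notpriv[OF \<rho>, of b d] inQ QS abd u by auto
  have 6: "c {a, d} \<noteq> c {v, u}" using notpriv[OF \<rho>, of a d] inQ QS abd u by auto
  have "rb c S"
    by (rule rb_intro[of a S b d v u]) (use inQ QS abd u v 1 2 3 4 5 6 in auto)
  then show False using nrb by simp
qed

lemma six:
  assumes f: "finite S" and c6: "card S = 6" and c7: "card (col c S) \<ge> 7"
  shows "rb c S"
proof (rule ccontr)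
  assume nrb: "\<not> rb c S"
  have "\<not> (\<forall>v\<in>S. card (priv c S v) \<ge> 2)" using allpriv[OF f, of c] c6 nrb by auto
  then obtain v where v: "v \<in> S" "\<not> 2 \<le> card (priv c S v)" by blast
  define W where "W = S - {v}"
  have fW: "finite W" and cW: "card W = 5" and WS: "W \<subseteq> S" using f c6 v unfolding W_def by auto
  have cc: "card (col c S) \<le> card (col c W) + card (priv c S v)" using col_split[OF f, of c v] W_def by simp
  show False
  proof (cases "priv c S v = {}")
    case True
    then have "rb c W" using five[OF fW cW, of c] cc c7 by simp
    then show False using rb_mono[OF WS] nrb by blast
  next
    case False
    then obtain \<rho> where \<rho>: "\<rho> \<in> priv c S v" by blast
    have c6W: "card (col c W) \<ge> 6" using cc c7 v(2) by simp
    obtain x0 where x0: "x0 \<in> S" "x0 \<noteq> v" "\<rho> = c {v, x0}" using priv_edge[OF \<rho>] by blast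
    define Q where "Q = W - {x0}"
    have fQ: "finite Q" and cQ: "card Q = 4" using fW cW x0 unfolding Q_def W_def by auto
    have QS: "Q \<subseteq> S" "v \<notin> Q" "x0 \<notin> Q" and WQ: "W = insert x0 Q" using x0 unfolding Q_def W_def by auto
    have cQ3: "card (col c Q) \<le> 3"
    proof (rule ccontr)
      assume "\<not> card (col c Q) \<le> 3"
      then have "tri c Q" using gallai[OF fQ, of c] cQ by simp
      then obtain a b d where abd: "a \<in> Q" "b \<in> Q" "d \<in> Q" "distinct [a, b, d]"
        "c {a, b} \<noteq> c {b, d}" "c {a, b} \<noteq> c {a, d}" "c {b, d} \<noteq> c {a, d}" unfolding tri_def by blast
      have 4: "c {a, b} \<noteq> c {v, x0}" using notpriv[OF \<rho>, of a b] abd QS x0 by auto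
      have 5: "c {b, d} \<noteq> c {v, x0}" using notpriv[OF \<rho>, of b d] abd QS x0 by auto
      have 6: "c {a, d} \<noteq> c {v, x0}" using notpriv[OF \<rho>, of a d] abd QS x0 by auto
      have "rb c S"
        by (rule rb_intro[of a S b d v x0]) (use abd QS x0 v 4 5 6 in auto)
      then show False using nrb by simp
    qed
    have colW: "col c W = col c Q \<union> (\<lambda>i. c {x0, i}) ` Q"
      using col_insert[of c x0 Q] WQ QS by (simp add: Un_commute)
    define N where "N = col c W - col c Q"
    have NI: "N \<subseteq> (\<lambda>i. c {x0, i}) ` Q" using colW N_def by auto
    have "col c W = col c Q \<union> N" using colW N_def by auto
    then have "card (col c W) \<le> card (col c Q) + card N" by (simp add: card_Un_le)
    then have "card N \<ge> 3" using c6W cQ3 by simp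
    moreover have "finite N" using finite_col[OF fW, of c] N_def by simp
    ultimately obtain \<alpha>1 \<alpha>2 \<alpha>3 where al: "\<alpha>1 \<in> N" "\<alpha>2 \<in> N" "\<alpha>3 \<in> N" "\<alpha>1 \<noteq> \<alpha>2" "\<alpha>1 \<noteq> \<alpha>3" "\<alpha>2 \<noteq> \<alpha>3"
      using three_elems by blast
    obtain i1 where i1: "i1 \<in> Q" "\<alpha>1 = c {x0, i1}" using al NI by blast
    obtain i2 where i2: "i2 \<in> Q" "\<alpha>2 = c {x0, i2}" using al NI by blast
    obtain i3 where i3: "i3 \<in> Q" "\<alpha>3 = c {x0, i3}" using al NI by blast
    have nQ: "c {x0, i1} \<notin> col c Q" "c {x0, i2} \<notin> col c Q" "c {x0, i3} \<notin> col c Q"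
      using al i1 i2 i3 N_def by auto
    have dis: "c {x0, i1} \<noteq> c {x0, i2}" "c {x0, i1} \<noteq> c {x0, i3}" "c {x0, i2} \<noteq> c {x0, i3}"
      using al i1 i2 i3 by auto
    have di: "i1 \<noteq> i2" "i1 \<noteq> i3" "i2 \<noteq> i3" using dis by auto
    have "card {i1, i2, i3} = 3" using di by simp
    then have "card (Q - {i1, i2, i3}) = 1" using cQ i1 i2 i3 fQ by (simp add: card_Diff_subset)
    then obtain i4 where i4: "Q - {i1, i2, i3} = {i4}" using card_1_singletonE by blast
    have i4Q: "i4 \<in> Q" "i4 \<noteq> i1" "i4 \<noteq> i2" "i4 \<noteq> i3" using i4 by auto
    have Qeq: "Q = {i1, i2, i3, i4}" using i4 i1 i2 i3 by auto
    have P: "c {k, l} = c {i, j} \<and> (c {v, l} = c {x0, i} \<or> c {v, l} = c {x0, j} \<or> c {v, l} = c {i, j})"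
      if Q4: "i \<in> Q" "j \<in> Q" "k \<in> Q" "l \<in> Q" and dd: "distinct [i, j, k, l]"
        and n1: "c {x0, i} \<notin> col c Q" and n2: "c {x0, j} \<notin> col c Q" and n12: "c {x0, i} \<noteq> c {x0, j}"
      for i j k l
    proof -
      have e1: "c {i, j} \<in> col c Q" using edge_col[of i Q j c] Q4 dd by simp
      have e2: "c {k, l} \<in> col c Q" using edge_col[of k Q l c] Q4 dd by simp
      have t1: "c {x0, i} \<noteq> c {i, j}" using n1 e1 by auto
      have t2: "c {x0, j} \<noteq> c {i, j}" using n2 e1 by auto
      have t3: "c {x0, i} \<noteq> c {k, l}" using n1 e2 by auto
      have t4: "c {x0, j} \<noteq> c {k, l}" using n2 e2 by auto
      have A: "c {k, l} = c {i, j}"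
      proof (rule ccontr)
        assume h: "c {k, l} \<noteq> c {i, j}"
        have "rb c S"
          by (rule rb_intro[of x0 S i j k l]) (use Q4 QS x0 dd t1 t2 t3 t4 n12 h in auto)
        then show False using nrb by simp
      qed
      have B: "c {v, l} = c {x0, i} \<or> c {v, l} = c {x0, j} \<or> c {v, l} = c {i, j}"
      proof (rule ccontr)
        assume h: "\<not> ?thesis"
        have "rb c S"
          by (rule rb_intro[of x0 S i j v l]) (use Q4 QS x0 v dd t1 t2 n12 h in auto)
        then show False using nrb by simp
      qed
      show ?thesis using A B by simp
    qed
    have R1: "c {i3, i4} = c {i1, i2}" "c {v, i4} = c {x0, i1} \<or> c {v, i4} = c {x0, i2} \<or> c {v, i4} = c {i1, i2}"
      using P[of i1 i2 i3 i4] i1 i2 i3 i4Q di nQ dis by auto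
    have R2: "c {i2, i4} = c {i1, i3}" "c {v, i4} = c {x0, i1} \<or> c {v, i4} = c {x0, i3} \<or> c {v, i4} = c {i1, i3}"
      using P[of i1 i3 i2 i4] i1 i2 i3 i4Q di nQ dis by auto
    have R3: "c {i1, i4} = c {i2, i3}" "c {v, i4} = c {x0, i2} \<or> c {v, i4} = c {x0, i3} \<or> c {v, i4} = c {i2, i3}"
      using P[of i2 i3 i1 i4] i1 i2 i3 i4Q di nQ dis by auto
    have e12: "c {i1, i2} \<in> col c Q" "c {i1, i3} \<in> col c Q" "c {i2, i3} \<in> col c Q"
      using edge_col[of _ Q _ c] i1 i2 i3 di by auto
    have all: "c {i1, i3} = c {i1, i2}" "c {i2, i3} = c {i1, i2}"
      using R1(2) R2(2) R3(2) nQ dis e12 by auto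
    define \<gamma> where "\<gamma> = c {i1, i2}"
    have sw: "\<And>p q. c {p, q} = c {q, p}" by (simp add: insert_commute)
    have eqs: "c {i1, i2} = \<gamma>" "c {i2, i1} = \<gamma>" "c {i1, i3} = \<gamma>" "c {i3, i1} = \<gamma>"
      "c {i2, i3} = \<gamma>" "c {i3, i2} = \<gamma>" "c {i3, i4} = \<gamma>" "c {i4, i3} = \<gamma>"
      "c {i2, i4} = \<gamma>" "c {i4, i2} = \<gamma>" "c {i1, i4} = \<gamma>" "c {i4, i1} = \<gamma>"
      using all R1(1) R2(1) R3(1) sw unfolding \<gamma>_def by metis+
    have colQ: "col c Q \<subseteq> {\<gamma>}"
    proof
      fix \<beta> assume "\<beta> \<in> col c Q"
      then obtain p q where pq: "p \<in> Q" "q \<in> Q" "p \<noteq> q" "\<beta> = c {p, q}" using col_E[of \<beta> c Q] by blast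
      have "c {p, q} = \<gamma>" using pq(1,2,3) eqs unfolding Qeq by auto
      then show "\<beta> \<in> {\<gamma>}" using pq by simp
    qed
    have "card (col c Q) \<le> 1" using card_mono[OF _ colQ] by simp
    moreover have "card ((\<lambda>i. c {x0, i}) ` Q) \<le> 4" using card_image_le[OF fQ] cQ by metis
    moreover have "card (col c W) \<le> card (col c Q) + card ((\<lambda>i. c {x0, i}) ` Q)"
      using colW by (simp add: card_Un_le)
    ultimately show False using c6W by simp
  qed
qed

lemma main: "finite S \<Longrightarrow> card S \<ge> 6 \<Longrightarrow> card (col c S) \<ge> card S + 1 \<Longrightarrow> rb c S"
proof (induction "card S" arbitrary: S rule: less_induct)
  case less
  show ?case
  proof (cases "card S = 6")
    case True then show ?thesis using six less.prems by simp
  next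
    case F6: False
    show ?thesis
    proof (cases "\<forall>v\<in>S. card (priv c S v) \<ge> 2")
      case True then show ?thesis using allpriv[OF less.prems(1), of c] less.prems(2) by simp
    next
      case False
      then obtain v where v: "v \<in> S" "\<not> 2 \<le> card (priv c S v)" by blast
      have cs: "card (S - {v}) = card S - 1" using v less.prems by simp
      have cc: "card (col c S) \<le> card (col c (S - {v})) + card (priv c S v)"
        by (rule col_split[OF less.prems(1)])
      have "rb c (S - {v})"
        using less.hyps[of "S - {v}"] cs less.prems cc v F6 by simp
      then show ?thesis using rb_mono[of "S - {v}" S] by blast
    qed
  qed
qed

lemma card4_distinct: "card {p, q, r, s} = 4 \<Longrightarrow> distinct [p, q, r, s]"
proof -
  assume h: "card {p, q, r, s} = 4"
  have "set [p, q, r, s] = {p, q, r, s}" by simp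
  then have "card (set [p, q, r, s]) = length [p, q, r, s]" using h by simp
  then show ?thesis by (rule card_distinct)
qed

lemma Kn_E: "Kn_edges n = E {0..<n}"
  unfolding Kn_edges_def E_def by simp

lemma hr_rb: "has_rainbow_C3_P2 n c = rb c {0..<n}"
  unfolding has_rainbow_C3_P2_def rb_def by simp

lemma upper:
  assumes n: "n \<ge> 5" and nr: "\<not> has_rainbow_C3_P2 n c"
  shows "card (c ` Kn_edges n) \<le> max n 6"
proof (rule ccontr)
  assume h: "\<not> ?thesis"
  have cc: "card (col c {0..<n}) > max n 6" using h unfolding col_def Kn_E by (simp add: not_le)
  have "rb c {0..<n}"
  proof (cases "n = 5")
    case True
    then show ?thesis using five[of "{0..<n}" c] cc by simp
  next
    case False
    then show ?thesis using main[of "{0..<n}" c] cc n by simp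
  qed
  then show False using nr hr_rb[of n c] by blast
qed

definition cbig :: "nat set \<Rightarrow> nat" where
  "cbig e = (if Min e = 0 then Max e else 0)"

lemma cbig_pair: "cbig {u, v} = (if min u v = 0 then max u v else 0)"
  unfolding cbig_def by (auto simp: min_def)

lemma cbig_image: assumes "n \<ge> 3" shows "cbig ` Kn_edges n = {0..<n}"
proof
  show "cbig ` Kn_edges n \<subseteq> {0..<n}"
  proof
    fix k assume "k \<in> cbig ` Kn_edges n"
    then obtain u v where uv: "u < n" "v < n" "k = cbig {u, v}" unfolding Kn_edges_def by blast
    then show "k \<in> {0..<n}" using assms by (auto simp: cbig_pair min_def max_def)
  qed
next
  show "{0..<n} \<subseteq> cbig ` Kn_edges n"
  proof
    fix k assume k: "k \<in> {0..<n}"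
    show "k \<in> cbig ` Kn_edges n"
    proof (cases "k = 0")
      case True
      have "{1, 2} \<in> Kn_edges n" unfolding Kn_edges_def using assms by force
      moreover have "cbig {1, 2} = 0" by (simp add: cbig_pair)
      ultimately show ?thesis using True by (metis image_eqI)
    next
      case False
      have "{0, k} \<in> Kn_edges n" unfolding Kn_edges_def using k False by force
      moreover have "cbig {0, k} = k" by (simp add: cbig_pair)
      ultimately show ?thesis by (metis image_eqI)
    qed
  qed
qed

lemma cbig_norb: "\<not> has_rainbow_C3_P2 n cbig"
proof
  assume "has_rainbow_C3_P2 n cbig"
  then obtain a b d x y where h: "distinct [a, b, d, x, y]"
    "card (cbig ` {{a, b}, {b, d}, {a, d}, {x, y}}) = 4"
    unfolding has_rainbow_C3_P2_def by blast
  then have "card {cbig {a, b}, cbig {b, d}, cbig {a, d}, cbig {x, y}} = 4" by simp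
  then have ds: "distinct [cbig {a, b}, cbig {b, d}, cbig {a, d}, cbig {x, y}]" by (rule card4_distinct)
  have z: "cbig {p, q} = 0" if "p \<noteq> 0" "q \<noteq> 0" for p q using that by (simp add: cbig_pair)
  show False
  proof (cases "a = 0")
    case True then show ?thesis using z[of b d] z[of x y] h ds by auto
  next
    case F1: False
    show ?thesis
    proof (cases "b = 0")
      case True then show ?thesis using z[of a d] z[of x y] h ds by auto
    next
      case F2: False
      show ?thesis
      proof (cases "d = 0")
        case True then show ?thesis using z[of a b] z[of x y] h ds by auto
      next
        case False then show ?thesis using z[of a b] z[of b d] h ds F1 F2 by auto
      qed
    qed
  qed
qed

definition f5 :: "nat \<Rightarrow> nat \<Rightarrow> nat" where
  "f5 i j = (if j = 4 then i else if (i = 0 \<and> j = 3) \<or> (i = 1 \<and> j = 2) then 4 else 5)"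
definition g5 :: "nat \<Rightarrow> nat \<Rightarrow> nat" where "g5 u v = f5 (min u v) (max u v)"
definition c5 :: "nat set \<Rightarrow> nat" where "c5 e = f5 (Min e) (Max e)"

lemma c5_pair: "c5 {u, v} = g5 u v" unfolding c5_def g5_def by simp

lemma g5_small: "u < 4 \<Longrightarrow> v < 4 \<Longrightarrow> u \<noteq> v \<Longrightarrow> g5 u v = (if u + v = 3 then 4 else 5)"
  by (auto simp: g5_def f5_def min_def max_def)

lemma g5_four: "u < 4 \<Longrightarrow> g5 u 4 = u" "u < 4 \<Longrightarrow> g5 4 u = u"
  by (auto simp: g5_def f5_def min_def max_def)

lemma g5_comp: assumes "p < 4" "q < 4" "r < 4" "s < 4" "distinct [p, q, r, s]"
  shows "g5 p q = g5 r s"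
proof -
  have sub: "{p, q, r, s} \<subseteq> {0..<4}" using assms by auto
  have "card {p, q, r, s} = 4" using assms(5) by simp
  then have "{p, q, r, s} = {0..<4}" using card_subset_eq[OF _ sub] by simp
  then have "sum id {p, q, r, s} = sum id {0..<4::nat}" by simp
  moreover have "sum id {p, q, r, s} = p + q + r + s" using assms(5) by simp
  moreover have "sum id {0..<4::nat} = 6" by (simp add: numeral_eq_Suc)
  ultimately have "p + q + r + s = 6" by simp
  then have "p + q = 3 \<longleftrightarrow> r + s = 3" by arith
  then show ?thesis using assms by (simp add: g5_small)
qed

lemma g5_tri: assumes "p < 4" "q < 4" "r < 4" "distinct [p, q, r]"
  shows "\<not> distinct [g5 p q, g5 q r, g5 p r]"
proof -
  have "g5 p q \<in> {4, 5}" "g5 q r \<in> {4, 5}" "g5 p r \<in> {4, 5}" using assms by (simp_all add: g5_small)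
  then show ?thesis by auto
qed

lemma c5_norb: "\<not> has_rainbow_C3_P2 5 c5"
proof
  assume "has_rainbow_C3_P2 5 c5"
  then obtain a b d x y where h: "a < 5" "b < 5" "d < 5" "x < 5" "y < 5" "distinct [a, b, d, x, y]"
    "card (c5 ` {{a, b}, {b, d}, {a, d}, {x, y}}) = 4"
    unfolding has_rainbow_C3_P2_def by blast
  then have "card {c5 {a, b}, c5 {b, d}, c5 {a, d}, c5 {x, y}} = 4" by simp
  then have ds: "distinct [g5 a b, g5 b d, g5 a d, g5 x y]" using card4_distinct by (simp add: c5_pair)
  have lt: "\<And>z::nat. z < 5 \<Longrightarrow> z \<noteq> 4 \<Longrightarrow> z < 4"
    using le_neq_implies_less by fastforce
  have four: "a = 4 \<or> b = 4 \<or> d = 4 \<or> x = 4 \<or> y = 4"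
  proof (rule ccontr)
    assume "\<not> ?thesis"
    then have "{a, b, d, x, y} \<subseteq> {0..<4}" using h lt by auto
    then have "card {a, b, d, x, y} \<le> 4" using card_mono[of "{0..<4::nat}"] by fastforce
    moreover have "card {a, b, d, x, y} = 5" using h(6) by simp
    ultimately show False by simp
  qed
  show False
  proof -
    { assume "x = 4 \<or> y = 4"
      then have "a < 4" "b < 4" "d < 4" using h lt by auto
      then have False using g5_tri[of a b d] h ds by auto }
    moreover
    { assume a4: "a = 4"
      then have "b < 4" "d < 4" "x < 4" "y < 4" using h lt by auto
      then have False using g5_comp[of b d x y] h ds a4 by auto }
    moreover
    { assume b4: "b = 4"
      then have "a < 4" "d < 4" "x < 4" "y < 4" using h lt by auto
      then have False using g5_comp[of a d x y] h ds b4 by auto }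
    moreover
    { assume d4: "d = 4"
      then have "a < 4" "b < 4" "x < 4" "y < 4" using h lt by auto
      then have False using g5_comp[of a b x y] h ds d4 by auto }
    ultimately show False using four by blast
  qed
qed

lemma c5_image: "c5 ` Kn_edges 5 = {0..<6}"
proof
  show "c5 ` Kn_edges 5 \<subseteq> {0..<6}"
  proof
    fix k assume "k \<in> c5 ` Kn_edges 5"
    then obtain u v where uv: "u < 5" "v < 5" "u \<noteq> v" "k = c5 {u, v}" unfolding Kn_edges_def by blast
    then show "k \<in> {0..<6}" by (auto simp: c5_pair g5_def f5_def min_def max_def)
  qed
next
  have e: "{u, v} \<in> Kn_edges 5" if "u < 5" "v < 5" "u \<noteq> v" for u v
    unfolding Kn_edges_def using that by blast
  have m: "k \<in> c5 ` Kn_edges 5" if "c5 {u, v} = k" "u < 5" "v < 5" "u \<noteq> v" for k u v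
    using e[OF that(2-4)] that(1) by blast
  show "{0..<6} \<subseteq> c5 ` Kn_edges 5"
  proof
    fix k :: nat assume "k \<in> {0..<6}"
    then have "k = 0 \<or> k = 1 \<or> k = 2 \<or> k = 3 \<or> k = 4 \<or> k = 5" by auto
    then show "k \<in> c5 ` Kn_edges 5"
    proof (elim disjE)
      assume "k = 0" then show ?thesis using m[of 0 4 k] by (simp add: c5_pair g5_def f5_def)
    next
      assume "k = 1" then show ?thesis using m[of 1 4 k] by (simp add: c5_pair g5_def f5_def)
    next
      assume "k = 2" then show ?thesis using m[of 2 4 k] by (simp add: c5_pair g5_def f5_def)
    next
      assume "k = 3" then show ?thesis using m[of 3 4 k] by (simp add: c5_pair g5_def f5_def)
    next
      assume "k = 4" then show ?thesis using m[of 0 3 k] by (simp add: c5_pair g5_def f5_def)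
    next
      assume "k = 5" then show ?thesis using m[of 0 1 k] by (simp add: c5_pair g5_def f5_def)
    qed
  qed
qed

lemma ar_val: assumes n: "n \<ge> 5" shows "ar_C3_P2 n = max n 6"
  unfolding ar_C3_P2_def
proof (rule Greatest_equality)
  show "\<exists>c :: nat set \<Rightarrow> nat. card (c ` Kn_edges n) = max n 6 \<and> \<not> has_rainbow_C3_P2 n c"
  proof (cases "n = 5")
    case True
    then show ?thesis using c5_image c5_norb by (intro exI[of _ c5]) simp
  next
    case False
    then show ?thesis using cbig_image[of n] cbig_norb[of n] n by (intro exI[of _ cbig]) simp
  qed
next
  fix y assume "\<exists>c :: nat set \<Rightarrow> nat. card (c ` Kn_edges n) = y \<and> \<not> has_rainbow_C3_P2 n c"
  then show "y \<le> max n 6" using upper[OF n] by blast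
qed

theorem proposition6p2:
  fixes n :: nat
  assumes "n \<ge> 5"
  shows "AR_C3_P2 n = max (n + 1) 7"
  using ar_val[OF assms] unfolding AR_C3_P2_def by simp

end
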